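(* Let $F$ be the unique series in $\mathbb{Q}[x,\bar x,y,\bar y][[t]]$ satisfying $(1-St)F=\bar x\bar y-\bar x t[x^0]F-\bar y t[y^0]F$, let $F_4=[x^\ge][y^\ge]F$, and put $O=xy-\bar xy-x\bar y+\bar x\bar y$. Then $$F_4(x,y,t)=\bar x\bar y t^2\,[y^>]\Bigl(\Bigl([\bar x]\frac{(y-\bar y)\,[\bar y]\frac{O}{1-St}}{1-St}\Bigr)\Bigl([x^>]\frac{x-\bar x}{1-St}\Bigr)\Bigr)+\bar x\bar y t^2\,[x^>]\Bigl(\Bigl([\bar y]\frac{(x-\bar x)\,[\bar x]\frac{O}{1-St}}{1-St}\Bigr)\Bigl([y^>]\frac{y-\bar y}{1-St}\Bigr)\Bigr).$$
   Context: Notation: $\bar x=x^{-1}$, $\bar y=y^{-1}$, $S=x+y+\bar x+\bar y$; series in $\mathbb{Q}[x,\bar x,y,\bar y][[t]]$, with $1/(1-St)$ expanded as a power series in $t$. For $G=\sum c_{i,j,n}x^iy^jt^n$: $[x^0]G=\sum_{j,n}c_{0,j,n}y^jt^n$; $[x^\ge]G$, $[x^>]G$ denote the sums of terms with $x$-exponent $\ge0$, $>0$ respectively, analogously for $y$; $[\bar x]G=\sum_{j,n}c_{-1,j,n}y^jt^n$ is the coefficient of $x^{-1}$ and $[\bar y]G=\sum_{i,n}c_{i,-1,n}x^it^n$ the coefficient of $y^{-1}$. *)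

theory Defs
  imports Main "HOL.Rat"
begin

text \<open>A series in Q[x,xbar,y,ybar][[t]] is represented by its coefficient function:
  F i j n is the coefficient of x^i y^j t^n.  Membership in Q[x,xbar,y,ybar][[t]]
  means every t-coefficient is a Laurent polynomial (finite support).\<close>

type_synonym ser = "int \<Rightarrow> int \<Rightarrow> nat \<Rightarrow> rat"

definition supp :: "ser \<Rightarrow> nat \<Rightarrow> (int \<times> int) set" where
  "supp A n = {p. A (fst p) (snd p) n \<noteq> 0}"

definition valid :: "ser \<Rightarrow> bool" where
  "valid A \<longleftrightarrow> (\<forall>n. finite (supp A n))"

definition sadd :: "ser \<Rightarrow> ser \<Rightarrow> ser" where
  "sadd A B = (\<lambda>i j n. A i j n + B i j n)"

definition ssub :: "ser \<Rightarrow> ser \<Rightarrow> ser" where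
  "ssub A B = (\<lambda>i j n. A i j n - B i j n)"

text \<open>Cauchy product (well defined for valid series).\<close>
definition smul :: "ser \<Rightarrow> ser \<Rightarrow> ser" where
  "smul A B = (\<lambda>i j n. \<Sum>m\<le>n. \<Sum>p\<in>supp A m.
      A (fst p) (snd p) m * B (i - fst p) (j - snd p) (n - m))"

definition lmon :: "rat \<Rightarrow> int \<Rightarrow> int \<Rightarrow> nat \<Rightarrow> ser" where
  "lmon c a b k = (\<lambda>i j n. if i = a \<and> j = b \<and> n = k then c else 0)"

definition Sser :: ser where
  "Sser = sadd (sadd (lmon 1 1 0 0) (lmon 1 (-1) 0 0)) (sadd (lmon 1 0 1 0) (lmon 1 0 (-1) 0))"

definition oneMinusSt :: ser where
  "oneMinusSt = ssub (lmon 1 0 0 0) (smul Sser (lmon 1 0 0 1))"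

text \<open>1/(1-St) = sum_n S^n t^n, coefficientwise: the t^(n+1)-coefficient is S times the t^n-coefficient.\<close>
fun invSt :: ser where
  "invSt i j 0 = (if i = 0 \<and> j = 0 then 1 else 0)"
| "invSt i j (Suc n) = invSt (i - 1) j n + invSt (i + 1) j n + invSt i (j - 1) n + invSt i (j + 1) n"

definition cx0 :: "ser \<Rightarrow> ser" where
  "cx0 F = (\<lambda>i j n. if i = 0 then F 0 j n else 0)"
definition cy0 :: "ser \<Rightarrow> ser" where
  "cy0 F = (\<lambda>i j n. if j = 0 then F i 0 n else 0)"
definition cxbar :: "ser \<Rightarrow> ser" where
  "cxbar F = (\<lambda>i j n. if i = 0 then F (-1) j n else 0)"
definition cybar :: "ser \<Rightarrow> ser" where
  "cybar F = (\<lambda>i j n. if j = 0 then F i (-1) n else 0)"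
definition xge :: "ser \<Rightarrow> ser" where
  "xge F = (\<lambda>i j n. if i \<ge> 0 then F i j n else 0)"
definition xgt :: "ser \<Rightarrow> ser" where
  "xgt F = (\<lambda>i j n. if i > 0 then F i j n else 0)"
definition yge :: "ser \<Rightarrow> ser" where
  "yge F = (\<lambda>i j n. if j \<ge> 0 then F i j n else 0)"
definition ygt :: "ser \<Rightarrow> ser" where
  "ygt F = (\<lambda>i j n. if j > 0 then F i j n else 0)"

definition Oser :: ser where
  "Oser = sadd (ssub (ssub (lmon 1 1 1 0) (lmon 1 (-1) 1 0)) (lmon 1 1 (-1) 0)) (lmon 1 (-1) (-1) 0)"

end

theory Submission
  imports Defs
begin


lemma supp_sum_superset:
  assumes "finite Z" "supp A m \<subseteq> Z"
  shows "(\<Sum>p\<in>supp A m. A (fst p) (snd p) m * f p) = (\<Sum>p\<in>Z. A (fst p) (snd p) m * f p)"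
  by (rule sum.mono_neutral_left) (use assms in \<open>auto simp: supp_def\<close>)

lemma valid_sadd: "valid A \<Longrightarrow> valid B \<Longrightarrow> valid (sadd A B)"
proof -
  assume a: "valid A" "valid B"
  have "supp (sadd A B) n \<subseteq> supp A n \<union> supp B n" for n by (auto simp: supp_def sadd_def)
  thus ?thesis using a unfolding valid_def by (meson finite_Un finite_subset)
qed

lemma valid_ssub: "valid A \<Longrightarrow> valid B \<Longrightarrow> valid (ssub A B)"
proof -
  assume a: "valid A" "valid B"
  have "supp (ssub A B) n \<subseteq> supp A n \<union> supp B n" for n by (auto simp: supp_def ssub_def)
  thus ?thesis using a unfolding valid_def by (meson finite_Un finite_subset)
qed

lemma valid_lmon: "valid (lmon c a b k)"
proof -
  have "supp (lmon c a b k) n \<subseteq> {(a,b)}" for n by (auto simp: supp_def lmon_def split: if_splits)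
  thus ?thesis unfolding valid_def by (meson finite.emptyI finite_insert finite_subset)
qed

lemma smul_sadd_left:
  assumes "valid A" "valid B"
  shows "smul (sadd A B) C = sadd (smul A C) (smul B C)"
proof (intro ext)
  fix i j n
  have "smul (sadd A B) C i j n = (\<Sum>m\<le>n. \<Sum>p\<in>supp A m \<union> supp B m.
      sadd A B (fst p) (snd p) m * C (i - fst p) (j - snd p) (n - m))"
    unfolding smul_def
    by (intro sum.cong refl supp_sum_superset) (use assms in \<open>auto simp: valid_def supp_def sadd_def\<close>)
  also have "\<dots> = (\<Sum>m\<le>n. (\<Sum>p\<in>supp A m \<union> supp B m. A (fst p) (snd p) m * C (i - fst p) (j - snd p) (n - m))
     + (\<Sum>p\<in>supp A m \<union> supp B m. B (fst p) (snd p) m * C (i - fst p) (j - snd p) (n - m)))"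
    by (simp add: sadd_def distrib_right sum.distrib)
  also have "\<dots> = smul A C i j n + smul B C i j n"
  proof -
    have eA: "(\<Sum>p\<in>supp A m \<union> supp B m. A (fst p) (snd p) m * C (i - fst p) (j - snd p) (n - m))
       = (\<Sum>p\<in>supp A m. A (fst p) (snd p) m * C (i - fst p) (j - snd p) (n - m))" for m
      by (rule supp_sum_superset[symmetric]) (use assms in \<open>auto simp: valid_def\<close>)
    have eB: "(\<Sum>p\<in>supp A m \<union> supp B m. B (fst p) (snd p) m * C (i - fst p) (j - snd p) (n - m))
       = (\<Sum>p\<in>supp B m. B (fst p) (snd p) m * C (i - fst p) (j - snd p) (n - m))" for m
      by (rule supp_sum_superset[symmetric]) (use assms in \<open>auto simp: valid_def\<close>)
    show ?thesis by (simp only: eA eB smul_def sum.distrib)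
  qed
  finally show "smul (sadd A B) C i j n = sadd (smul A C) (smul B C) i j n" by (simp add: sadd_def)
qed

lemma smul_ssub_left:
  assumes "valid A" "valid B"
  shows "smul (ssub A B) C = ssub (smul A C) (smul B C)"
proof (intro ext)
  fix i j n
  have "smul (ssub A B) C i j n = (\<Sum>m\<le>n. \<Sum>p\<in>supp A m \<union> supp B m.
      ssub A B (fst p) (snd p) m * C (i - fst p) (j - snd p) (n - m))"
    unfolding smul_def
    by (intro sum.cong refl supp_sum_superset) (use assms in \<open>auto simp: valid_def supp_def ssub_def\<close>)
  also have "\<dots> = (\<Sum>m\<le>n. (\<Sum>p\<in>supp A m \<union> supp B m. A (fst p) (snd p) m * C (i - fst p) (j - snd p) (n - m))
     - (\<Sum>p\<in>supp A m \<union> supp B m. B (fst p) (snd p) m * C (i - fst p) (j - snd p) (n - m)))"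
    by (simp add: ssub_def left_diff_distrib sum_subtractf)
  also have "\<dots> = smul A C i j n - smul B C i j n"
  proof -
    have eA: "(\<Sum>p\<in>supp A m \<union> supp B m. A (fst p) (snd p) m * C (i - fst p) (j - snd p) (n - m))
       = (\<Sum>p\<in>supp A m. A (fst p) (snd p) m * C (i - fst p) (j - snd p) (n - m))" for m
      by (rule supp_sum_superset[symmetric]) (use assms in \<open>auto simp: valid_def\<close>)
    have eB: "(\<Sum>p\<in>supp A m \<union> supp B m. B (fst p) (snd p) m * C (i - fst p) (j - snd p) (n - m))
       = (\<Sum>p\<in>supp B m. B (fst p) (snd p) m * C (i - fst p) (j - snd p) (n - m))" for m
      by (rule supp_sum_superset[symmetric]) (use assms in \<open>auto simp: valid_def\<close>)
    show ?thesis by (simp only: eA eB smul_def sum_subtractf)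
  qed
  finally show "smul (ssub A B) C i j n = ssub (smul A C) (smul B C) i j n" by (simp add: ssub_def)
qed

lemma smul_lmon:
  "smul (lmon c a b k) A i j n = (if k \<le> n then c * A (i - a) (j - b) (n - k) else 0)"
proof -
  have s: "supp (lmon c a b k) m = (if m = k \<and> c \<noteq> 0 then {(a,b)} else {})" for m
    by (auto simp: supp_def lmon_def)
  have i: "(\<Sum>p\<in>supp (lmon c a b k) m. lmon c a b k (fst p) (snd p) m * A (i - fst p) (j - snd p) (n - m))
     = (if k = m then c * A (i - a) (j - b) (n - m) else 0)" for m
    unfolding s by (auto simp: lmon_def)
  show ?thesis unfolding smul_def i by simp
qed



lemma valid_smul:
  assumes "valid A" "valid B" shows "valid (smul A B)"
  unfolding valid_def
proof
  fix n
  let ?U = "\<Union>m\<in>{..n}. \<Union>p\<in>supp A m. \<Union>q\<in>supp B (n - m). {(fst p + fst q, snd p + snd q)}"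
  have "supp (smul A B) n \<subseteq> ?U"
  proof
    fix z assume "z \<in> supp (smul A B) n"
    then obtain i j where z: "z = (i,j)" and nz: "smul A B i j n \<noteq> 0" by (cases z) (auto simp: supp_def)
    from nz obtain m where m: "m \<in> {..n}" and
      "(\<Sum>p\<in>supp A m. A (fst p) (snd p) m * B (i - fst p) (j - snd p) (n - m)) \<noteq> 0"
      unfolding smul_def by (meson sum.not_neutral_contains_not_neutral)
    then obtain p where p: "p \<in> supp A m" and "A (fst p) (snd p) m * B (i - fst p) (j - snd p) (n - m) \<noteq> 0"
      by (meson sum.not_neutral_contains_not_neutral)
    hence "(i - fst p, j - snd p) \<in> supp B (n - m)" by (auto simp: supp_def)
    with m p show "z \<in> ?U" unfolding z by force
  qed
  moreover have "finite ?U" using assms unfolding valid_def by auto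
  ultimately show "finite (supp (smul A B) n)" by (rule finite_subset)
qed

lemma valid_cxbar: "valid A \<Longrightarrow> valid (cxbar A)"
proof -
  assume a: "valid A"
  have "supp (cxbar A) n \<subseteq> (\<lambda>p. (0, snd p)) ` supp A n" for n
    by (auto simp: supp_def cxbar_def image_iff split: if_splits)
  thus ?thesis using a unfolding valid_def by (meson finite_imageI finite_subset)
qed

lemma valid_cybar: "valid A \<Longrightarrow> valid (cybar A)"
proof -
  assume a: "valid A"
  have "supp (cybar A) n \<subseteq> (\<lambda>p. (fst p, 0)) ` supp A n" for n
    by (auto simp: supp_def cybar_def image_iff split: if_splits)
  thus ?thesis using a unfolding valid_def by (meson finite_imageI finite_subset)
qed

lemma valid_xgt: "valid A \<Longrightarrow> valid (xgt A)"
proof -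
  assume a: "valid A"
  have "supp (xgt A) n \<subseteq> supp A n" for n by (auto simp: supp_def xgt_def)
  thus ?thesis using a unfolding valid_def by (meson finite_subset)
qed

lemma valid_ygt: "valid A \<Longrightarrow> valid (ygt A)"
proof -
  assume a: "valid A"
  have "supp (ygt A) n \<subseteq> supp A n" for n by (auto simp: supp_def ygt_def)
  thus ?thesis using a unfolding valid_def by (meson finite_subset)
qed

lemma invSt_bound: "invSt i j n \<noteq> 0 \<Longrightarrow> \<bar>i\<bar> + \<bar>j\<bar> \<le> int n"
proof (induction n arbitrary: i j)
  case 0 thus ?case by (auto split: if_splits)
next
  case (Suc n)
  from Suc.prems have "invSt (i - 1) j n \<noteq> 0 \<or> invSt (i + 1) j n \<noteq> 0 \<or> invSt i (j - 1) n \<noteq> 0 \<or> invSt i (j + 1) n \<noteq> 0"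
    by auto
  thus ?case using Suc.IH by (elim disjE; fastforce)
qed

lemma valid_invSt: "valid invSt"
  unfolding valid_def
proof
  fix n
  have "supp invSt n \<subseteq> {-int n..int n} \<times> {-int n..int n}"
    by (auto simp: supp_def dest!: invSt_bound)
  thus "finite (supp invSt n)" by (rule finite_subset) auto
qed

lemma invSt_negx: "invSt (-i) j n = invSt i j n"
proof (induction n arbitrary: i j)
  case 0 thus ?case by simp
next
  case (Suc n)
  have "invSt (-i - 1) j n = invSt (i+1) j n" using Suc.IH[of "i+1" j] by simp
  moreover have "invSt (-i + 1) j n = invSt (i - 1) j n" using Suc.IH[of "i - 1" j] by simp
  ultimately show ?case using Suc.IH by simp
qed

lemma invSt_negy: "invSt i (-j) n = invSt i j n"
proof (induction n arbitrary: i j)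
  case 0 thus ?case by simp
next
  case (Suc n)
  have "invSt i (-j - 1) n = invSt i (j+1) n" using Suc.IH[of i "j+1"] by simp
  moreover have "invSt i (-j + 1) n = invSt i (j - 1) n" using Suc.IH[of i "j - 1"] by simp
  ultimately show ?case using Suc.IH by simp
qed

lemma invSt_swap: "invSt j i n = invSt i j n"
  by (induction n arbitrary: i j) auto

lemma smul_invSt_0: "valid g \<Longrightarrow> smul g invSt i j 0 = g i j 0"
proof -
  assume v: "valid g"
  have "smul g invSt i j 0 = (\<Sum>p\<in>supp g 0. if p = (i,j) then g i j 0 else 0)"
    unfolding smul_def by (auto intro!: sum.cong)
  also have "\<dots> = g i j 0" using v by (auto simp: valid_def supp_def)
  finally show ?thesis .
qed

lemma smul_invSt_Suc:
  assumes v: "valid g"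
  shows "smul g invSt i j (Suc n) = g i j (Suc n) + smul g invSt (i - 1) j n + smul g invSt (i + 1) j n
     + smul g invSt i (j - 1) n + smul g invSt i (j + 1) n"
proof -
  let ?f = "\<lambda>m. \<Sum>p\<in>supp g m. g (fst p) (snd p) m * invSt (i - fst p) (j - snd p) (Suc n - m)"
  have "smul g invSt i j (Suc n) = (\<Sum>m\<le>n. ?f m) + ?f (Suc n)"
    unfolding smul_def by simp
  moreover have "?f (Suc n) = g i j (Suc n)"
  proof -
    have "?f (Suc n) = (\<Sum>p\<in>supp g (Suc n). if p = (i,j) then g i j (Suc n) else 0)"
      by (auto intro!: sum.cong)
    also have "\<dots> = g i j (Suc n)" using v by (auto simp: valid_def supp_def)
    finally show ?thesis .
  qed
  moreover have "(\<Sum>m\<le>n. ?f m) = (\<Sum>m\<le>n. \<Sum>p\<in>supp g m.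
      g (fst p) (snd p) m * invSt (i - 1 - fst p) (j - snd p) (n - m)
    + g (fst p) (snd p) m * invSt (i + 1 - fst p) (j - snd p) (n - m)
    + g (fst p) (snd p) m * invSt (i - fst p) (j - 1 - snd p) (n - m)
    + g (fst p) (snd p) m * invSt (i - fst p) (j + 1 - snd p) (n - m))"
  proof (intro sum.cong refl)
    fix m p assume "m \<in> {..n}"
    hence s: "Suc n - m = Suc (n - m)" by auto
    have e: "i - fst p - 1 = i - 1 - fst p" "i - fst p + 1 = i + 1 - fst p"
      "j - snd p - 1 = j - 1 - snd p" "j - snd p + 1 = j + 1 - snd p" by simp_all
    show "g (fst p) (snd p) m * invSt (i - fst p) (j - snd p) (Suc n - m) =
      g (fst p) (snd p) m * invSt (i - 1 - fst p) (j - snd p) (n - m)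
    + g (fst p) (snd p) m * invSt (i + 1 - fst p) (j - snd p) (n - m)
    + g (fst p) (snd p) m * invSt (i - fst p) (j - 1 - snd p) (n - m)
    + g (fst p) (snd p) m * invSt (i - fst p) (j + 1 - snd p) (n - m)"
      by (simp only: s invSt.simps(2) e distrib_left)
  qed
  ultimately show ?thesis by (simp add: sum.distrib smul_def)
qed

lemma valid_Sser: "valid Sser"
  unfolding Sser_def by (intro valid_sadd valid_lmon)

lemma smul_Sser: "smul Sser X i j n = X (i - 1) j n + X (i + 1) j n + X i (j - 1) n + X i (j + 1) n"
  unfolding Sser_def
  by (simp only: smul_sadd_left valid_sadd valid_lmon) (simp add: sadd_def smul_lmon)

lemma oneMinusSt_eq: "oneMinusSt = ssub (lmon 1 0 0 0) (sadd (sadd (lmon 1 1 0 1) (lmon 1 (-1) 0 1))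
   (sadd (lmon 1 0 1 1) (lmon 1 0 (-1) 1)))"
  unfolding oneMinusSt_def by (auto simp: fun_eq_iff ssub_def smul_Sser sadd_def lmon_def)

lemma smul_oneMinusSt: "smul oneMinusSt X i j n = X i j n -
   (if 1 \<le> n then X (i - 1) j (n - 1) + X (i + 1) j (n - 1) + X i (j - 1) (n - 1) + X i (j + 1) (n - 1) else 0)"
  unfolding oneMinusSt_eq
  by (simp only: smul_sadd_left smul_ssub_left valid_sadd valid_lmon) (simp add: sadd_def ssub_def smul_lmon)



definition sw :: "ser \<Rightarrow> ser" where "sw A = (\<lambda>i j n. A j i n)"

lemma supp_sw: "supp (sw A) m = prod.swap ` supp A m"
  by (auto simp: supp_def sw_def image_iff)

lemma sw_smul: "sw (smul A B) = smul (sw A) (sw B)"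
proof (intro ext)
  fix i j n
  have "smul (sw A) (sw B) i j n = (\<Sum>m\<le>n. \<Sum>p\<in>supp A m.
     A (fst p) (snd p) m * B (j - fst p) (i - snd p) (n - m))"
    unfolding smul_def supp_sw
    by (subst sum.reindex) (auto simp: sw_def)
  thus "sw (smul A B) i j n = smul (sw A) (sw B) i j n" by (simp add: sw_def smul_def)
qed

lemma sw_lmon: "sw (lmon c a b k) = lmon c b a k" by (auto simp: fun_eq_iff sw_def lmon_def)
lemma sw_sadd: "sw (sadd A B) = sadd (sw A) (sw B)" by (auto simp: fun_eq_iff sw_def sadd_def)
lemma sw_ssub: "sw (ssub A B) = ssub (sw A) (sw B)" by (auto simp: fun_eq_iff sw_def ssub_def)
lemma sw_cxbar: "sw (cxbar A) = cybar (sw A)" by (auto simp: fun_eq_iff sw_def cxbar_def cybar_def)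
lemma sw_cybar: "sw (cybar A) = cxbar (sw A)" by (auto simp: fun_eq_iff sw_def cxbar_def cybar_def)
lemma sw_xgt: "sw (xgt A) = ygt (sw A)" by (auto simp: fun_eq_iff sw_def xgt_def ygt_def)
lemma sw_ygt: "sw (ygt A) = xgt (sw A)" by (auto simp: fun_eq_iff sw_def xgt_def ygt_def)
lemma sw_invSt: "sw invSt = invSt" by (auto simp: fun_eq_iff sw_def invSt_swap)
lemma sw_Oser: "sw Oser = Oser"
  by (auto simp: fun_eq_iff sw_def Oser_def sadd_def ssub_def lmon_def)

lemma propag_x:
  assumes v: "valid g" and s: "\<And>i j n. g (-i) j n = c * g i j n"
  shows "smul g invSt (-i) j n = c * smul g invSt i j n"
proof (induction n arbitrary: i j)
  case 0 thus ?case using v s by (simp add: smul_invSt_0)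
next
  case (Suc n)
  have a: "smul g invSt (-i - 1) j n = c * smul g invSt (i + 1) j n" using Suc.IH[of "i+1" j] by simp
  have b: "smul g invSt (1 - i) j n = c * smul g invSt (i - 1) j n" using Suc.IH[of "i - 1" j] by simp
  show ?case using v by (simp add: smul_invSt_Suc a b Suc.IH s distrib_left)
qed

lemma propag_y:
  assumes v: "valid g" and s: "\<And>i j n. g i (-j) n = c * g i j n"
  shows "smul g invSt i (-j) n = c * smul g invSt i j n"
proof (induction n arbitrary: i j)
  case 0 thus ?case using v s by (simp add: smul_invSt_0)
next
  case (Suc n)
  have a: "smul g invSt i (-j - 1) n = c * smul g invSt i (j + 1) n" using Suc.IH[of i "j+1"] by simp
  have b: "smul g invSt i (1 - j) n = c * smul g invSt i (j - 1) n" using Suc.IH[of i "j - 1"] by simp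
  show ?case using v by (simp add: smul_invSt_Suc a b Suc.IH s distrib_left)
qed

definition W :: ser where "W = smul Oser invSt"
definition h1 :: ser where "h1 = smul (ssub (lmon 1 0 1 0) (lmon 1 0 (-1) 0)) (cybar W)"
definition K :: ser where "K = smul h1 invSt"
definition Aa :: ser where "Aa = cxbar K"
definition D :: ser where "D = smul Aa invSt"
definition T1 :: ser where "T1 = smul (lmon 1 (-1) (-1) 2)
       (ygt (smul Aa (xgt (smul (ssub (lmon 1 1 0 0) (lmon 1 (-1) 0 0)) invSt))))"

lemma valid_Oser: "valid Oser" unfolding Oser_def by (intro valid_sadd valid_ssub valid_lmon)

lemma smul_Oser: "smul Oser X i j n = X (i - 1) (j - 1) n - X (i + 1) (j - 1) n - X (i - 1) (j + 1) n + X (i + 1) (j + 1) n"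
  unfolding Oser_def
  by (simp only: smul_sadd_left smul_ssub_left valid_sadd valid_ssub valid_lmon) (simp add: sadd_def ssub_def smul_lmon)

lemma valid_W: "valid W" unfolding W_def by (intro valid_smul valid_Oser valid_invSt)

lemma W_eq: "W i j n = invSt (i - 1) (j - 1) n - invSt (i + 1) (j - 1) n - invSt (i - 1) (j + 1) n + invSt (i + 1) (j + 1) n"
  unfolding W_def smul_Oser ..

lemma invSt_nx: "invSt (- i - 1) j n = invSt (i + 1) j n" "invSt (1 - i) j n = invSt (i - 1) j n"
   "invSt (-1 - i) j n = invSt (i + 1) j n"
  by (subst invSt_negx[symmetric], simp add: algebra_simps)+
lemma invSt_ny: "invSt i (- j - 1) n = invSt i (j + 1) n" "invSt i (1 - j) n = invSt i (j - 1) n"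
   "invSt i (-1 - j) n = invSt i (j + 1) n"
  by (subst invSt_negy[symmetric], simp add: algebra_simps)+

lemma W_negx: "W (-i) j n = - W i j n" by (simp add: W_eq invSt_nx)
lemma W_negy: "W i (-j) n = - W i j n" by (simp add: W_eq invSt_ny)
lemma W_x0: "W 0 j n = 0" using W_negx[of 0 j n] by simp
lemma W_y0: "W i 0 n = 0" using W_negy[of i 0 n] by simp

lemma W_Suc: "W i j (Suc n) = W (i - 1) j n + W (i + 1) j n + W i (j - 1) n + W i (j + 1) n"
  by (simp add: W_eq algebra_simps)

lemma W_0: "i < 0 \<Longrightarrow> j < 0 \<Longrightarrow> W i j 0 = (if i = -1 \<and> j = -1 then 1 else 0)"
  by (auto simp: W_eq)

lemma valid_h1: "valid h1" unfolding h1_def by (intro valid_smul valid_ssub valid_lmon valid_cybar valid_W)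

lemma h1_eq: "h1 i j n = (if j = 1 then W i (-1) n else 0) - (if j = -1 then W i (-1) n else 0)"
  unfolding h1_def
  by (simp only: smul_ssub_left valid_lmon) (simp add: ssub_def smul_lmon cybar_def)

lemma valid_K: "valid K" unfolding K_def by (intro valid_smul valid_h1 valid_invSt)

lemma K_0: "K i j 0 = h1 i j 0" unfolding K_def by (simp add: smul_invSt_0 valid_h1)
lemma K_Suc: "K i j (Suc n) = h1 i j (Suc n) + K (i - 1) j n + K (i + 1) j n + K i (j - 1) n + K i (j + 1) n"
  unfolding K_def by (simp add: smul_invSt_Suc valid_h1)

lemma K_negx: "K (-i) j n = - K i j n"
  using propag_x[OF valid_h1, of "-1"] unfolding K_def by (simp add: h1_eq W_negx)
lemma K_negy: "K i (-j) n = - K i j n"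
  using propag_y[OF valid_h1, of "-1"] unfolding K_def by (auto simp: h1_eq)
lemma K_x0: "K 0 j n = 0" using K_negx[of 0 j n] by simp
lemma K_y0: "K i 0 n = 0" using K_negy[of i 0 n] by simp

lemma valid_Aa: "valid Aa" unfolding Aa_def by (intro valid_cxbar valid_K)
lemma Aa_eq: "Aa i j n = (if i = 0 then K (-1) j n else 0)" unfolding Aa_def cxbar_def ..

lemma D_0: "D i j 0 = Aa i j 0" unfolding D_def by (simp add: smul_invSt_0 valid_Aa)
lemma D_Suc: "D i j (Suc n) = Aa i j (Suc n) + D (i - 1) j n + D (i + 1) j n + D i (j - 1) n + D i (j + 1) n"
  unfolding D_def by (simp add: smul_invSt_Suc valid_Aa)
lemma D_negx: "D (-i) j n = D i j n"
  using propag_x[OF valid_Aa, of 1] unfolding D_def by (simp add: Aa_eq)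
lemma D_negy: "D i (-j) n = - D i j n"
  using propag_y[OF valid_Aa, of "-1"] unfolding D_def by (simp add: Aa_eq K_negy)

lemma smul_xmx: "smul (ssub (lmon 1 1 0 0) (lmon 1 (-1) 0 0)) X i j n = X (i - 1) j n - X (i + 1) j n"
  by (simp only: smul_ssub_left valid_lmon) (simp add: ssub_def smul_lmon)

lemma gen8:
  assumes v: "valid G" and z: "\<And>i j n. i \<noteq> 0 \<Longrightarrow> G i j n = 0"
  shows "smul G (xgt (smul (ssub (lmon 1 1 0 0) (lmon 1 (-1) 0 0)) invSt)) i j n =
    (if i > 0 then smul G invSt (i - 1) j n - smul G invSt (i + 1) j n else 0)"
proof -
  have f: "fst p = 0" if "p \<in> supp G m" for p m using that z by (cases p) (auto simp: supp_def)
  have "smul G (xgt (smul (ssub (lmon 1 1 0 0) (lmon 1 (-1) 0 0)) invSt)) i j n =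
    (\<Sum>m\<le>n. \<Sum>p\<in>supp G m. if i > 0 then G (fst p) (snd p) m * invSt (i - 1 - fst p) (j - snd p) (n - m)
       - G (fst p) (snd p) m * invSt (i + 1 - fst p) (j - snd p) (n - m) else 0)"
    unfolding smul_def[of G] xgt_def smul_xmx
    by (intro sum.cong refl) (auto simp: f right_diff_distrib)
  also have "\<dots> = (if i > 0 then smul G invSt (i - 1) j n - smul G invSt (i + 1) j n else 0)"
    by (simp add: smul_def sum_subtractf)
  finally show ?thesis .
qed

lemma T1_eq: "T1 i j n = (if 2 \<le> n \<and> 0 \<le> i \<and> 0 \<le> j then D i (j + 1) (n - 2) - D (i + 2) (j + 1) (n - 2) else 0)"
proof -
  have "smul Aa (xgt (smul (ssub (lmon 1 1 0 0) (lmon 1 (-1) 0 0)) invSt)) a b k =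
    (if a > 0 then D (a - 1) b k - D (a + 1) b k else 0)" for a b k
    unfolding D_def by (rule gen8[OF valid_Aa]) (simp add: Aa_eq)
  thus ?thesis unfolding T1_def by (auto simp: smul_lmon ygt_def algebra_simps)
qed



lemma D_x1: "D (-1) b m = D 1 b m" using D_negx[of 1 b m] by simp
lemma D_y0: "D a 0 m = 0" using D_negy[of a 0 m] by simp

lemma T1_rec:
  assumes "0 \<le> i" "0 \<le> j"
  shows "T1 i j (Suc (Suc n)) = (if i = 0 then K (-1) (j + 1) n else 0)
     + (if 1 \<le> i then T1 (i - 1) j (Suc n) else 0) + T1 (i + 1) j (Suc n)
     + (if 1 \<le> j then T1 i (j - 1) (Suc n) else 0) + T1 i (j + 1) (Suc n)"
proof (cases n)
  case 0 thus ?thesis using assms by (simp add: T1_eq D_0 Aa_eq)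
next
  case (Suc m)
  have t0: "T1 i j (Suc (Suc n)) = D i (j + 1) (Suc m) - D (i + 2) (j + 1) (Suc m)"
    using assms Suc by (simp add: T1_eq algebra_simps)
  have d1: "D i (j + 1) (Suc m) = Aa i (j + 1) (Suc m) + D (i - 1) (j + 1) m + D (i + 1) (j + 1) m + D i j m + D i (j + 2) m"
    using D_Suc[of i "j+1" m] by (simp add: algebra_simps)
  have d2: "D (i + 2) (j + 1) (Suc m) = Aa (i + 2) (j + 1) (Suc m) + D (i + 1) (j + 1) m + D (i + 3) (j + 1) m + D (i + 2) j m + D (i + 2) (j + 2) m"
    using D_Suc[of "i + 2" "j+1" m] by (simp add: algebra_simps)
  have e: "T1 i j (Suc (Suc n)) = Aa i (j + 1) (Suc m) - Aa (i + 2) (j + 1) (Suc m)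
     + (D (i - 1) (j + 1) m - D (i + 1) (j + 1) m) + (D (i + 1) (j + 1) m - D (i + 3) (j + 1) m)
     + (D i j m - D (i + 2) j m) + (D i (j + 2) m - D (i + 2) (j + 2) m)"
    using t0 d1 d2 by linarith
  have a: "Aa i (j + 1) (Suc m) - Aa (i + 2) (j + 1) (Suc m) = (if i = 0 then K (-1) (j + 1) n else 0)"
    using assms Suc by (simp add: Aa_eq)
  have b: "D (i - 1) (j + 1) m - D (i + 1) (j + 1) m = (if 1 \<le> i then T1 (i - 1) j (Suc n) else 0)"
    using assms Suc by (cases "i = 0") (simp_all add: T1_eq D_x1 algebra_simps)
  have c: "D (i + 1) (j + 1) m - D (i + 3) (j + 1) m = T1 (i + 1) j (Suc n)"
    using assms Suc by (simp add: T1_eq algebra_simps)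
  have d: "D i j m - D (i + 2) j m = (if 1 \<le> j then T1 i (j - 1) (Suc n) else 0)"
    using assms Suc by (cases "j = 0") (simp_all add: T1_eq D_y0 algebra_simps)
  have f: "D i (j + 2) m - D (i + 2) (j + 2) m = T1 i (j + 1) (Suc n)"
    using assms Suc by (simp add: T1_eq algebra_simps)
  show ?thesis unfolding e a b c d f ..
qed

context
  fixes F :: ser
  assumes hyp: "smul oneMinusSt F =
          ssub (ssub (lmon 1 (-1) (-1) 0) (smul (lmon 1 (-1) 0 1) (cx0 F)))
               (smul (lmon 1 0 (-1) 1) (cy0 F))"
begin

lemma Fpt: "smul oneMinusSt F i j n = ssub (ssub (lmon 1 (-1) (-1) 0) (smul (lmon 1 (-1) 0 1) (cx0 F)))
               (smul (lmon 1 0 (-1) 1) (cy0 F)) i j n"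
  using hyp by simp

lemma F_0: "F i j 0 = (if i = -1 \<and> j = -1 then 1 else 0)"
  using Fpt[of i j 0] by (simp only: smul_oneMinusSt ssub_def smul_lmon) (simp add: lmon_def)

lemma F_Suc: "F i j (Suc n) = F (i - 1) j n + F (i + 1) j n + F i (j - 1) n + F i (j + 1) n
   - (if i = -1 then F 0 j n else 0) - (if j = -1 then F i 0 n else 0)"
  using Fpt[of i j "Suc n"] by (simp only: smul_oneMinusSt ssub_def smul_lmon) (auto simp add: lmon_def cx0_def cy0_def)

lemma F_sw: "F j i n = F i j n"
proof (induction n arbitrary: i j)
  case 0 thus ?case by (auto simp: F_0)
next
  case (Suc n)
  show ?case
    by (simp add: F_Suc[of j i n] F_Suc[of i j n] Suc.IH[of "j - 1" i] Suc.IH[of "j + 1" i]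
        Suc.IH[of j "i - 1"] Suc.IH[of j "i + 1"] Suc.IH[of 0 i] Suc.IH[of j 0])
qed

lemma FW: "i < 0 \<Longrightarrow> j < 0 \<Longrightarrow> F i j n = W i j n"
proof (induction n arbitrary: i j)
  case 0 thus ?case by (simp add: F_0 W_0)
next
  case (Suc n)
  show ?case using Suc.prems unfolding F_Suc[of i j n] W_Suc[of i j n]
    by (cases "i = -1"; cases "j = -1") (simp_all add: Suc.IH W_x0 W_y0)
qed

lemma FK: "i < 0 \<Longrightarrow> 0 \<le> j \<Longrightarrow> F i j (Suc n) = K i (j + 1) n"
proof (induction n arbitrary: i j)
  case 0 thus ?case
    by (simp add: F_Suc[of i j 0] F_0 K_0 h1_eq FW[of i "-1" 0] W_0)
next
  case (Suc n)
  show ?case using Suc.prems unfolding F_Suc[of i j "Suc n"] K_Suc[of i "j+1" n]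
    by (cases "i = -1"; cases "j = 0") (simp_all add: Suc.IH h1_eq FW K_x0 K_y0)
qed

lemma Fmain: "0 \<le> i \<Longrightarrow> 0 \<le> j \<Longrightarrow> F i j n = T1 i j n + T1 j i n"
proof (induction n arbitrary: i j)
  case 0 thus ?case by (simp add: F_0 T1_eq)
next
  case (Suc n)
  show ?case
  proof (cases n)
    case 0 thus ?thesis using Suc.prems by (simp add: F_Suc F_0 T1_eq)
  next
    case (Suc m)
    have fx: "F (i - 1) j (Suc m) = (if i = 0 then K (-1) (j + 1) m else T1 (i - 1) j (Suc m) + T1 j (i - 1) (Suc m))"
      using Suc.IH[of "i - 1" j] Suc.prems \<open>n = Suc m\<close> FK[of "-1" j m] by auto
    have fy: "F i (j - 1) (Suc m) = (if j = 0 then K (-1) (i + 1) m else T1 i (j - 1) (Suc m) + T1 (j - 1) i (Suc m))"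
      using Suc.IH[of i "j - 1"] Suc.prems \<open>n = Suc m\<close> FK[of "-1" i m] F_sw[of i "-1" "Suc m"] by auto
    have f: "F i j (Suc n) = F (i - 1) j (Suc m) + F (i + 1) j (Suc m) + F i (j - 1) (Suc m) + F i (j + 1) (Suc m)"
      using Suc.prems \<open>n = Suc m\<close> by (simp add: F_Suc[of i j "Suc m"])
    show ?thesis
      unfolding f fx fy using Suc.prems \<open>n = Suc m\<close> Suc.IH[of "i+1" j] Suc.IH[of i "j+1"]
      by (simp add: T1_rec[of i j m] T1_rec[of j i m])
  qed
qed

end


theorem mainTheorem4:
  fixes F :: ser
  assumes "valid F"
    and "smul oneMinusSt F =
          ssub (ssub (lmon 1 (-1) (-1) 0) (smul (lmon 1 (-1) 0 1) (cx0 F)))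
               (smul (lmon 1 0 (-1) 1) (cy0 F))"
  shows "xge (yge F) =
    sadd
     (smul (lmon 1 (-1) (-1) 2)
       (ygt (smul
          (cxbar (smul (smul (ssub (lmon 1 0 1 0) (lmon 1 0 (-1) 0)) (cybar (smul Oser invSt))) invSt))
          (xgt (smul (ssub (lmon 1 1 0 0) (lmon 1 (-1) 0 0)) invSt)))))
     (smul (lmon 1 (-1) (-1) 2)
       (xgt (smul
          (cybar (smul (smul (ssub (lmon 1 1 0 0) (lmon 1 (-1) 0 0)) (cxbar (smul Oser invSt))) invSt))
          (ygt (smul (ssub (lmon 1 0 1 0) (lmon 1 0 (-1) 0)) invSt)))))"
proof -
  have e1: "T1 = smul (lmon 1 (-1) (-1) 2)
       (ygt (smul
          (cxbar (smul (smul (ssub (lmon 1 0 1 0) (lmon 1 0 (-1) 0)) (cybar (smul Oser invSt))) invSt))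
          (xgt (smul (ssub (lmon 1 1 0 0) (lmon 1 (-1) 0 0)) invSt))))"
    by (simp only: T1_def Aa_def K_def h1_def W_def)
  have e2: "sw T1 = smul (lmon 1 (-1) (-1) 2)
       (xgt (smul
          (cybar (smul (smul (ssub (lmon 1 1 0 0) (lmon 1 (-1) 0 0)) (cxbar (smul Oser invSt))) invSt))
          (ygt (smul (ssub (lmon 1 0 1 0) (lmon 1 0 (-1) 0)) invSt))))"
    by (simp only: T1_def Aa_def K_def h1_def W_def sw_smul sw_lmon sw_ssub sw_cxbar sw_cybar sw_xgt sw_ygt
        sw_invSt sw_Oser)
  have "xge (yge F) = sadd T1 (sw T1)"
  proof (intro ext)
    fix i j n
    show "xge (yge F) i j n = sadd T1 (sw T1) i j n"
    proof (cases "0 \<le> i \<and> 0 \<le> j")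
      case True thus ?thesis using Fmain[OF assms(2), of i j n] by (simp add: xge_def yge_def sadd_def sw_def)
    next
      case False thus ?thesis by (auto simp: xge_def yge_def sadd_def sw_def T1_eq)
    qed
  qed
  hence "xge (yge F) = sadd T1 (smul (lmon 1 (-1) (-1) 2)
       (xgt (smul
          (cybar (smul (smul (ssub (lmon 1 1 0 0) (lmon 1 (-1) 0 0)) (cxbar (smul Oser invSt))) invSt))
          (ygt (smul (ssub (lmon 1 0 1 0) (lmon 1 0 (-1) 0)) invSt)))))" by (simp only: e2)
  thus ?thesis by (simp only: e1)
qed

end
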